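(* Let $H\in\mathbb{R}^{\ell\times\ell}$ be symmetric, $0\neq g_0\in\mathbb{R}^{\ell}$ and $\gamma>0$. Consider the quadratic eigenvalue problem (QEP) $(H-\lambda I)^2w=\gamma^{-2}g_0g_0^{\top}w$, where an eigenvalue is a $\lambda\in\mathbb{C}$ for which there is a nonzero $w\in\mathbb{C}^{\ell}$ satisfying this equation. Then the leftmost eigenvalue of this QEP (the one with the smallest real part) is real. As a consequence, the optimal value $\lambda_*$ of the problem pQEPmin — minimize $\lambda$ over $\lambda\in\mathbb{R}$ and $0\ne w\in\mathbb{R}^\ell$ with $(H-\lambda I)^2w=\gamma^{-2}g_0g_0^{\top}w$ — is the leftmost eigenvalue of this QEP. *)

theory Defs
  imports "HOL-Analysis.Analysis"
begin

definition cmat :: "real^'n^'m \<Rightarrow> complex^'n^'m" where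
  "cmat A = (\<chi> i j. complex_of_real (A$i$j))"

definition outer :: "real^'n \<Rightarrow> real^'n^'n" where
  "outer g = (\<chi> i j. g$i * g$j)"

definition qep_eigenvalue :: "real^'n^'n \<Rightarrow> real^'n \<Rightarrow> real \<Rightarrow> complex \<Rightarrow> bool" where
  "qep_eigenvalue H g \<gamma> lam \<longleftrightarrow>
     (\<exists>w::complex^'n. w \<noteq> 0 \<and>
        ((cmat H - mat lam) ** (cmat H - mat lam)) *v w
          = complex_of_real (1 / \<gamma>^2) *s (cmat (outer g) *v w))"

definition pqep_feasible :: "real^'n^'n \<Rightarrow> real^'n \<Rightarrow> real \<Rightarrow> real \<Rightarrow> bool" where
  "pqep_feasible H g \<gamma> lam \<longleftrightarrow>
     (\<exists>w::real^'n. w \<noteq> 0 \<and>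
        ((H - mat lam) ** (H - mat lam)) *v w = (1 / \<gamma>^2) *s (outer g *v w))"

end

theory Submission
  imports Defs
begin

lemma sym_dot:
  fixes S :: "real^'n^'n"
  assumes "transpose S = S"
  shows "(S *v x) \<bullet> y = x \<bullet> (S *v y)"
proof -
  have "x \<bullet> (S *v y) = (x v* S) \<bullet> y" by (simp add: dot_lmul_matrix)
  also have "x v* S = S *v x" by (metis assms vector_transpose_matrix)
  finally show ?thesis by simp
qed

lemma psd_kernel:
  fixes S :: "real^'n^'n"
  assumes sym: "transpose S = S" and psd: "\<And>x. 0 \<le> x \<bullet> (S *v x)" and z: "x \<bullet> (S *v x) = 0"
  shows "S *v x = 0"
proof (rule ccontr)
  assume ne: "S *v x \<noteq> 0"
  define z where "z = S *v x"
  have zz: "z \<bullet> z > 0" using ne z_def by simp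
  define t where "t = (z \<bullet> z) / (z \<bullet> (S *v z) + 1)"
  have q: "0 \<le> z \<bullet> (S *v z)" by (rule psd)
  have tpos: "t > 0" using zz q t_def by simp
  have "0 \<le> (x - t *\<^sub>R z) \<bullet> (S *v (x - t *\<^sub>R z))" by (rule psd)
  also have "\<dots> = x \<bullet> (S *v x) - 2 * t * (z \<bullet> z) + t^2 * (z \<bullet> (S *v z))"
  proof -
    have e: "S *v (x - t *\<^sub>R z) = S *v x - t *\<^sub>R (S *v z)"
      by (simp add: matrix_vector_mult_diff_distrib matrix_vector_mult_scaleR)
    have "(t *\<^sub>R z) \<bullet> (S *v x) = t * (z \<bullet> z)" using z_def by simp
    moreover have "x \<bullet> (S *v z) = z \<bullet> z" using sym_dot[OF sym, of x z] z_def by (simp add: inner_commute)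
    moreover have "z \<bullet> (S *v x) = z \<bullet> z" using z_def by simp
    ultimately show ?thesis using e
      by (simp add: inner_diff_left inner_diff_right algebra_simps power2_eq_square)
  qed
  also have "\<dots> = t * (t * (z \<bullet> (S *v z)) - 2 * (z \<bullet> z))" using z by (simp add: algebra_simps power2_eq_square)
  finally have h: "0 \<le> t * (t * (z \<bullet> (S *v z)) - 2 * (z \<bullet> z))" .
  have "t * (z \<bullet> (S *v z)) < (z \<bullet> z) + (z \<bullet> z)"
  proof -
    have "t * (z \<bullet> (S *v z)) \<le> t * (z \<bullet> (S *v z) + 1)" using tpos by simp
    also have "\<dots> = z \<bullet> z" using q t_def by simp
    finally show ?thesis using zz by linarith
  qed
  hence "t * (t * (z \<bullet> (S *v z)) - 2 * (z \<bullet> z)) < 0" using tpos by (simp add: mult_pos_neg)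
  with h show False by simp
qed

lemma psd_pd:
  fixes S :: "real^'n^'n"
  assumes sym: "transpose S = S" and psd: "\<And>x. 0 \<le> x \<bullet> (S *v x)"
    and ker: "\<And>x. S *v x = 0 \<Longrightarrow> x = 0"
  shows "\<exists>\<delta>>0. \<forall>x. \<delta> * (x \<bullet> x) \<le> x \<bullet> (S *v x)"
proof -
  have cont: "continuous_on (sphere 0 1) (\<lambda>x::real^'n. x \<bullet> (S *v x))"
    by (intro continuous_intros linear_continuous_on matrix_vector_mul_linear_gen) 
  have ne: "sphere (0::real^'n) 1 \<noteq> {}"
    using norm_axis_1 by (metis mem_sphere_0 empty_iff)
  obtain x0 where x0: "x0 \<in> sphere 0 1" and mn: "\<And>y. y \<in> sphere 0 1 \<Longrightarrow> x0 \<bullet> (S *v x0) \<le> y \<bullet> (S *v y)"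
    using continuous_attains_inf[OF compact_sphere ne cont] by blast
  define \<delta> where "\<delta> = x0 \<bullet> (S *v x0)"
  have "x0 \<noteq> 0" using x0 by auto
  hence "S *v x0 \<noteq> 0" using ker by blast
  hence "\<delta> \<noteq> 0" using psd_kernel[OF sym psd, of x0] \<delta>_def by auto
  hence dpos: "\<delta> > 0" using psd[of x0] \<delta>_def by simp
  have "\<delta> * (x \<bullet> x) \<le> x \<bullet> (S *v x)" for x
  proof (cases "x = 0")
    case True then show ?thesis by simp
  next
    case False
    define u where "u = (1 / norm x) *\<^sub>R x"
    have "u \<in> sphere 0 1" using False u_def by simp
    hence "\<delta> \<le> u \<bullet> (S *v u)" using mn \<delta>_def by blast
    also have "u \<bullet> (S *v u) = (x \<bullet> (S *v x)) / (norm x)^2"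
      using u_def by (simp add: matrix_vector_mult_scaleR power2_eq_square)
    finally have "\<delta> * (norm x)^2 \<le> x \<bullet> (S *v x)" using False by (simp add: pos_le_divide_eq)
    then show ?thesis by (simp add: power2_norm_eq_inner)
  qed
  with dpos show ?thesis by blast
qed

lemma mat_mulv: "(mat l :: real^'n^'n) *v x = l *\<^sub>R x"
  by (simp add: vec_eq_iff matrix_vector_mult_def mat_def if_distrib if_distribR cong: if_cong)

lemma outer_mulv: "outer g *v x = (g \<bullet> x) *\<^sub>R g"
  by (simp add: vec_eq_iff matrix_vector_mult_def outer_def inner_vec_def sum_distrib_left algebra_simps)

lemma scaleR_mulv: "((c::real) *\<^sub>R (B::real^'n^'m)) *v x = c *\<^sub>R (B *v x)"
  by (simp add: vec_eq_iff matrix_vector_mult_def sum_distrib_left algebra_simps)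

lemma transpose_outer: "transpose (outer g) = outer g"
  by (simp add: vec_eq_iff transpose_def outer_def mult.commute)

lemma transpose_minus: "transpose (A - B :: real^'n^'n) = transpose A - transpose B"
  by (simp add: vec_eq_iff transpose_def)

definition Am :: "real^'n^'n \<Rightarrow> real \<Rightarrow> real^'n^'n" where
  "Am H l = H - mat l"

definition Mm :: "real^'n^'n \<Rightarrow> real^'n \<Rightarrow> real \<Rightarrow> real \<Rightarrow> real^'n^'n" where
  "Mm H g cc l = Am H l ** Am H l - cc *\<^sub>R outer g"

lemma Am_sym: "transpose H = H \<Longrightarrow> transpose (Am H l) = Am H l"
  by (simp add: Am_def transpose_minus)

lemma Mm_sym: "transpose H = H \<Longrightarrow> transpose (Mm H g cc l) = Mm H g cc l"
  by (simp add: Mm_def transpose_minus Am_sym matrix_transpose_mul transpose_scalar transpose_outer)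

lemma Am_mulv: "Am H l *v x = H *v x - l *\<^sub>R x"
  by (simp add: Am_def matrix_vector_mult_diff_rdistrib mat_mulv)

lemma Am_shift: "Am H m *v x = Am H l *v x + (l - m) *\<^sub>R x"
  by (simp add: Am_mulv algebra_simps)

lemma Mm_mulv: "Mm H g cc l *v x = Am H l *v (Am H l *v x) - (cc * (g \<bullet> x)) *\<^sub>R g"
  by (simp add: Mm_def matrix_vector_mult_diff_rdistrib scaleR_mulv outer_mulv matrix_vector_mul_assoc)

lemma Mm_form:
  assumes "transpose H = H"
  shows "x \<bullet> (Mm H g cc l *v x) = (Am H l *v x) \<bullet> (Am H l *v x) - cc * (g \<bullet> x)^2"
  using sym_dot[OF Am_sym[OF assms], of l x "Am H l *v x"]
  by (simp add: Mm_mulv inner_diff_right power2_eq_square inner_commute)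

lemma Q_shift:
  assumes "transpose H = H"
  shows "x \<bullet> (Mm H g cc m *v x) = x \<bullet> (Mm H g cc l *v x) + 2 * (l - m) * (x \<bullet> (Am H l *v x)) + (l - m)^2 * (x \<bullet> x)"
  unfolding Mm_form[OF assms] Am_shift[of H m x l]
  by (simp add: inner_add_left inner_add_right power2_eq_square algebra_simps inner_commute)

lemma Am_form: "x \<bullet> (Am H l *v x) = x \<bullet> (H *v x) - l * (x \<bullet> x)"
  by (simp add: Am_mulv inner_diff_right)

lemma H_bound:
  fixes H :: "real^'n^'n"
  obtains K where "K > 0" "\<And>x. norm (H *v x) \<le> norm x * K" "\<And>x. \<bar>x \<bullet> (H *v x)\<bar> \<le> K * (x \<bullet> x)"
proof -
  obtain K where K: "K > 0" "\<And>x. norm (H *v x) \<le> norm x * K"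
    using bounded_linear.pos_bounded[OF matrix_vector_mul_bounded_linear[of H]] by blast
  have "\<bar>x \<bullet> (H *v x)\<bar> \<le> K * (x \<bullet> x)" for x
  proof -
    have "\<bar>x \<bullet> (H *v x)\<bar> \<le> norm x * norm (H *v x)" by (rule Cauchy_Schwarz_ineq2)
    also have "\<dots> \<le> norm x * (norm x * K)" using K(2)[of x] by (simp add: mult_left_mono)
    also have "\<dots> = K * (x \<bullet> x)" by (simp add: power2_norm_eq_inner[symmetric] power2_eq_square)
    finally show ?thesis .
  qed
  with K show ?thesis using that by blast
qed

lemma exists_lstar:
  fixes H :: "real^'n^'n" and g :: "real^'n"
  assumes sym: "transpose H = H" and g: "g \<noteq> 0" and cc: "cc > 0"
  shows "\<exists>l. (\<forall>x. 0 \<le> x \<bullet> (Am H l *v x)) \<and> (\<forall>x. 0 \<le> x \<bullet> (Mm H g cc l *v x))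
             \<and> (\<exists>w. w \<noteq> 0 \<and> Mm H g cc l *v w = 0)"
proof -
  obtain K where K: "K > 0" "\<And>x. norm (H *v x) \<le> norm x * K" "\<And>x. \<bar>x \<bullet> (H *v x)\<bar> \<le> K * (x \<bullet> x)"
    using H_bound by blast
  define T where "T = {l. \<forall>x. 0 \<le> x \<bullet> (Am H l *v x) \<and> 0 \<le> x \<bullet> (Mm H g cc l *v x)}"
  have Mexp: "x \<bullet> (Mm H g cc l *v x) = x \<bullet> (Mm H g cc 0 *v x) + 2 * (0 - l) * (x \<bullet> (Am H 0 *v x)) + (0 - l)^2 * (x \<bullet> x)" for x l
    by (rule Q_shift[OF sym])
  have closedT: "closed T"
    unfolding T_def Am_form
    apply (subst Mexp)
    apply (intro closed_Collect_all closed_Collect_conj allI closed_Collect_le continuous_intros)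
    done
  define R where "R = cc * (g \<bullet> g) + 1"
  have R1: "R \<ge> 1" using cc R_def by simp
  define l0 where "l0 = - (K + R)"
  have l0T: "l0 \<in> T"
  proof -
    have "0 \<le> x \<bullet> (Am H l0 *v x) \<and> 0 \<le> x \<bullet> (Mm H g cc l0 *v x)" for x
    proof
      have "- K * (x \<bullet> x) \<le> x \<bullet> (H *v x)" using K(3)[of x] by linarith
      moreover have "0 \<le> R * (x \<bullet> x)" using R1 by simp
      ultimately show "0 \<le> x \<bullet> (Am H l0 *v x)" unfolding Am_form l0_def by (simp add: algebra_simps)
    next
      have "norm (l0 *\<^sub>R x) \<le> norm (H *v x) + norm (Am H l0 *v x)"
        using norm_triangle_ineq4[of "H *v x" "Am H l0 *v x"] by (simp add: Am_mulv)
      moreover have "norm (l0 *\<^sub>R x) = (K + R) * norm x" using K(1) R1 by (simp add: l0_def)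
      ultimately have "(K + R) * norm x \<le> norm x * K + norm (Am H l0 *v x)"
        using K(2)[of x] by linarith
      hence n1: "R * norm x \<le> norm (Am H l0 *v x)" by (simp add: algebra_simps)
      hence "(R * norm x)^2 \<le> (norm (Am H l0 *v x))^2" using R1 by (intro power_mono) auto
      hence n2: "R^2 * (x \<bullet> x) \<le> (Am H l0 *v x) \<bullet> (Am H l0 *v x)"
        by (simp add: power_mult_distrib power2_norm_eq_inner)
      have "R * (x \<bullet> x) \<le> R^2 * (x \<bullet> x)" using R1
        by (intro mult_right_mono) (auto simp: power2_eq_square)
      moreover have "(g \<bullet> x)^2 \<le> (g \<bullet> g) * (x \<bullet> x)"
      proof -
        have "\<bar>g \<bullet> x\<bar> \<le> norm g * norm x" by (rule Cauchy_Schwarz_ineq2)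
        hence "\<bar>g \<bullet> x\<bar>^2 \<le> (norm g * norm x)^2" by (intro power_mono) auto
        thus ?thesis by (simp add: power_mult_distrib power2_norm_eq_inner)
      qed
      hence "cc * (g \<bullet> x)^2 \<le> cc * ((g \<bullet> g) * (x \<bullet> x))" using cc by simp
      moreover have "cc * ((g \<bullet> g) * (x \<bullet> x)) \<le> R * (x \<bullet> x)" unfolding R_def by (simp add: algebra_simps)
      ultimately show "0 \<le> x \<bullet> (Mm H g cc l0 *v x)" unfolding Mm_form[OF sym] using n2 by linarith
    qed
    thus ?thesis unfolding T_def by blast
  qed
  have bdd: "bdd_above T"
  proof
    fix l assume "l \<in> T"
    hence "0 \<le> g \<bullet> (Am H l *v g)" unfolding T_def by blast
    hence "l * (g \<bullet> g) \<le> g \<bullet> (H *v g)" unfolding Am_form by simp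
    moreover have "g \<bullet> g > 0" using g by simp
    ultimately show "l \<le> (g \<bullet> (H *v g)) / (g \<bullet> g)" by (simp add: pos_le_divide_eq)
  qed
  define ls where "ls = Sup T"
  have lsT: "ls \<in> T" unfolding ls_def using closed_contains_Sup[OF _ bdd closedT] l0T by blast
  have notT: "ls + e \<notin> T" if "e > 0" for e
    using cSup_upper[OF _ bdd, of "ls + e"] that ls_def by auto
  have psdA: "\<And>x. 0 \<le> x \<bullet> (Am H ls *v x)" and psdM: "\<And>x. 0 \<le> x \<bullet> (Mm H g cc ls *v x)"
    using lsT unfolding T_def by auto
  have "\<exists>w. w \<noteq> 0 \<and> Mm H g cc ls *v w = 0"
  proof (rule ccontr)
    assume nw: "\<not> ?thesis"
    have kerA: "x = 0" if "Am H ls *v x = 0" for x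
    proof (rule ccontr)
      assume x0: "x \<noteq> 0"
      have "0 \<le> x \<bullet> (Mm H g cc ls *v x)" by (rule psdM)
      hence "cc * (g \<bullet> x)^2 \<le> 0" unfolding Mm_form[OF sym] using that by simp
      hence "g \<bullet> x = 0" using cc by (simp add: mult_le_0_iff)
      hence "Mm H g cc ls *v x = 0" by (simp add: Mm_mulv that)
      with x0 nw show False by blast
    qed
    have kerM: "x = 0" if "Mm H g cc ls *v x = 0" for x using nw that by blast
    obtain d1 where d1: "d1 > 0" "\<And>x. d1 * (x \<bullet> x) \<le> x \<bullet> (Am H ls *v x)"
      using psd_pd[OF Am_sym[OF sym] psdA kerA] by blast
    obtain d2 where d2: "d2 > 0" "\<And>x. d2 * (x \<bullet> x) \<le> x \<bullet> (Mm H g cc ls *v x)"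
      using psd_pd[OF Mm_sym[OF sym] psdM kerM] by blast
    define K2 where "K2 = K + \<bar>ls\<bar>"
    have K2: "K2 > 0" using K(1) K2_def by simp
    have upA: "x \<bullet> (Am H ls *v x) \<le> K2 * (x \<bullet> x)" for x
    proof -
      have "x \<bullet> (H *v x) \<le> K * (x \<bullet> x)" using K(3)[of x] by linarith
      moreover have "- ls * (x \<bullet> x) \<le> \<bar>ls\<bar> * (x \<bullet> x)" by (intro mult_right_mono) auto
      ultimately show ?thesis unfolding Am_form K2_def by (simp add: algebra_simps)
    qed
    define e where "e = min d1 (d2 / (2 * K2))"
    have e: "e > 0" "e \<le> d1" "2 * K2 * e \<le> d2" using d1 d2 K2 e_def by (auto simp: min_def field_simps)
    have "ls + e \<in> T" unfolding T_def
    proof (intro CollectI allI conjI)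
      fix x
      have "x \<bullet> (Am H (ls + e) *v x) = x \<bullet> (Am H ls *v x) - e * (x \<bullet> x)"
        unfolding Am_form by (simp add: algebra_simps)
      moreover have "e * (x \<bullet> x) \<le> d1 * (x \<bullet> x)" using e by (intro mult_right_mono) auto
      ultimately show "0 \<le> x \<bullet> (Am H (ls + e) *v x)" using d1(2)[of x] by linarith
    next
      fix x
      have "x \<bullet> (Mm H g cc (ls + e) *v x) = x \<bullet> (Mm H g cc ls *v x) + 2 * (ls - (ls + e)) * (x \<bullet> (Am H ls *v x)) + (ls - (ls + e))^2 * (x \<bullet> x)"
        by (rule Q_shift[OF sym])
      also have "\<dots> = x \<bullet> (Mm H g cc ls *v x) - 2 * e * (x \<bullet> (Am H ls *v x)) + e^2 * (x \<bullet> x)"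
        by (simp add: power2_eq_square)
      finally have eq: "x \<bullet> (Mm H g cc (ls + e) *v x) = x \<bullet> (Mm H g cc ls *v x) - 2 * e * (x \<bullet> (Am H ls *v x)) + e^2 * (x \<bullet> x)" .
      have "2 * e * (x \<bullet> (Am H ls *v x)) \<le> 2 * e * (K2 * (x \<bullet> x))" using upA[of x] e by simp
      moreover have "2 * e * (K2 * (x \<bullet> x)) \<le> d2 * (x \<bullet> x)"
        using e by (simp add: mult_right_mono mult.assoc[symmetric] mult.commute[of 2 e] mult.commute[of _ K2])
      moreover have "0 \<le> e^2 * (x \<bullet> x)" by simp
      ultimately show "0 \<le> x \<bullet> (Mm H g cc (ls + e) *v x)" using eq d2(2)[of x] by linarith
    qed
    with notT[OF e(1)] show False by blast
  qed
  with psdA psdM show ?thesis by blast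
qed

definition re_v :: "complex^'n \<Rightarrow> real^'n" where "re_v w = (\<chi> i. Re (w$i))"
definition im_v :: "complex^'n \<Rightarrow> real^'n" where "im_v w = (\<chi> i. Im (w$i))"

lemma re_cmat: "re_v (cmat A *v w) = A *v re_v w"
  by (simp add: vec_eq_iff re_v_def matrix_vector_mult_def cmat_def Re_sum)

lemma im_cmat: "im_v (cmat A *v w) = A *v im_v w"
  by (simp add: vec_eq_iff im_v_def matrix_vector_mult_def cmat_def Im_sum)

lemma cmat_mulv: "(mat (\<mu>::complex) :: complex^'n^'n) *v y = \<mu> *s y"
  by (simp add: vec_eq_iff matrix_vector_mult_def mat_def if_distrib if_distribR cong: if_cong)

lemma cmat_mat_mulv: "(A - mat (\<mu>::complex)) *v y = A *v y - \<mu> *s y"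
  by (simp add: matrix_vector_mult_diff_rdistrib cmat_mulv)

lemma mulv_smult: "(A::complex^'n^'m) *v (\<mu> *s y) = \<mu> *s (A *v y)"
  by (simp add: vec_eq_iff matrix_vector_mult_def sum_distrib_left algebra_simps)

lemma qep_expand:
  fixes A :: "complex^'n^'n"
  shows "((A - mat \<mu>) ** (A - mat \<mu>)) *v w = A *v (A *v w) - (2*\<mu>) *s (A *v w) + (\<mu>^2) *s w"
proof -
  have "((A - mat \<mu>) ** (A - mat \<mu>)) *v w = (A - mat \<mu>) *v ((A - mat \<mu>) *v w)"
    by (simp add: matrix_vector_mul_assoc)
  also have "\<dots> = A *v (A *v w) - A *v (\<mu> *s w) - \<mu> *s (A *v w - \<mu> *s w)"
    by (simp add: cmat_mat_mulv matrix_vector_mult_diff_distrib)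
  also have "\<dots> = A *v (A *v w) - (2*\<mu>) *s (A *v w) + (\<mu>^2) *s w"
    by (simp add: mulv_smult vec_eq_iff algebra_simps power2_eq_square)
  finally show ?thesis .
qed

lemma re_v_ops:
  "re_v (x - y) = re_v x - re_v y" "re_v (x + y) = re_v x + re_v y"
  "re_v (c *s x) = Re c *\<^sub>R re_v x - Im c *\<^sub>R im_v x"
  "im_v (x - y) = im_v x - im_v y" "im_v (x + y) = im_v x + im_v y"
  "im_v (c *s x) = Re c *\<^sub>R im_v x + Im c *\<^sub>R re_v x"
  by (simp_all add: vec_eq_iff re_v_def im_v_def algebra_simps)

lemma reim_zero: "w = 0 \<longleftrightarrow> re_v w = 0 \<and> im_v w = 0"
  by (auto simp: vec_eq_iff re_v_def im_v_def complex_eq_iff)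

lemma qep_real_eqs:
  fixes H :: "real^'n^'n" and g :: "real^'n"
  assumes eq: "((cmat H - mat \<mu>) ** (cmat H - mat \<mu>)) *v w
          = complex_of_real cc *s (cmat (outer g) *v w)"
  defines "u \<equiv> re_v w" and "v \<equiv> im_v w" and "\<alpha> \<equiv> Re \<mu>" and "\<beta> \<equiv> Im \<mu>"
  shows "H *v (H *v u) - (2*\<alpha>) *\<^sub>R (H *v u) + (2*\<beta>) *\<^sub>R (H *v v) + (\<alpha>^2 - \<beta>^2) *\<^sub>R u - (2*\<alpha>*\<beta>) *\<^sub>R v
          = (cc * (g \<bullet> u)) *\<^sub>R g"
    and "H *v (H *v v) - (2*\<alpha>) *\<^sub>R (H *v v) - (2*\<beta>) *\<^sub>R (H *v u) + (\<alpha>^2 - \<beta>^2) *\<^sub>R v + (2*\<alpha>*\<beta>) *\<^sub>R u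
          = (cc * (g \<bullet> v)) *\<^sub>R g"
proof -
  note eq' = eq[unfolded qep_expand]
  have "re_v (cmat H *v (cmat H *v w) - (2*\<mu>) *s (cmat H *v w) + (\<mu>^2) *s w) = re_v (complex_of_real cc *s (cmat (outer g) *v w))"
    using eq' by simp
  thus "H *v (H *v u) - (2*\<alpha>) *\<^sub>R (H *v u) + (2*\<beta>) *\<^sub>R (H *v v) + (\<alpha>^2 - \<beta>^2) *\<^sub>R u - (2*\<alpha>*\<beta>) *\<^sub>R v
          = (cc * (g \<bullet> u)) *\<^sub>R g"
    unfolding re_v_ops re_cmat im_cmat outer_mulv u_def v_def \<alpha>_def \<beta>_def
    by (simp add: power2_eq_square algebra_simps)
  have "im_v (cmat H *v (cmat H *v w) - (2*\<mu>) *s (cmat H *v w) + (\<mu>^2) *s w) = im_v (complex_of_real cc *s (cmat (outer g) *v w))"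
    using eq' by simp
  thus "H *v (H *v v) - (2*\<alpha>) *\<^sub>R (H *v v) - (2*\<beta>) *\<^sub>R (H *v u) + (\<alpha>^2 - \<beta>^2) *\<^sub>R v + (2*\<alpha>*\<beta>) *\<^sub>R u
          = (cc * (g \<bullet> v)) *\<^sub>R g"
    unfolding re_v_ops re_cmat im_cmat outer_mulv u_def v_def \<alpha>_def \<beta>_def
    by (simp add: power2_eq_square algebra_simps)
qed

lemma scalar_eqs:
  fixes H :: "real^'n^'n" and g u v :: "real^'n"
  assumes sym: "transpose H = H"
    and R: "H *v (H *v u) - (2*\<alpha>) *\<^sub>R (H *v u) + (2*\<beta>) *\<^sub>R (H *v v) + (\<alpha>^2 - \<beta>^2) *\<^sub>R u - (2*\<alpha>*\<beta>) *\<^sub>R v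
          = (cc * (g \<bullet> u)) *\<^sub>R g"
    and I: "H *v (H *v v) - (2*\<alpha>) *\<^sub>R (H *v v) - (2*\<beta>) *\<^sub>R (H *v u) + (\<alpha>^2 - \<beta>^2) *\<^sub>R v + (2*\<alpha>*\<beta>) *\<^sub>R u
          = (cc * (g \<bullet> v)) *\<^sub>R g"
  shows "((H *v u) \<bullet> (H *v u) + (H *v v) \<bullet> (H *v v)) - 2 * \<alpha> * (u \<bullet> (H *v u) + v \<bullet> (H *v v))
           + (\<alpha>^2 - \<beta>^2) * (u \<bullet> u + v \<bullet> v) = cc * ((g \<bullet> u)^2 + (g \<bullet> v)^2)"
    and "\<beta> * ((u \<bullet> (H *v u) + v \<bullet> (H *v v)) - \<alpha> * (u \<bullet> u + v \<bullet> v)) = 0"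
proof -
  have s1: "u \<bullet> (H *v (H *v u)) = (H *v u) \<bullet> (H *v u)" using sym_dot[OF sym, of u "H *v u"] by simp
  have s2: "v \<bullet> (H *v (H *v v)) = (H *v v) \<bullet> (H *v v)" using sym_dot[OF sym, of v "H *v v"] by simp
  have s3: "v \<bullet> (H *v (H *v u)) = (H *v v) \<bullet> (H *v u)" using sym_dot[OF sym, of v "H *v u"] by simp
  have s4: "u \<bullet> (H *v (H *v v)) = (H *v v) \<bullet> (H *v u)" using sym_dot[OF sym, of u "H *v v"] by (simp add: inner_commute)
  have s5: "u \<bullet> (H *v v) = v \<bullet> (H *v u)" using sym_dot[OF sym, of u v] by (simp add: inner_commute)
  have e1: "u \<bullet> (H *v (H *v u) - (2*\<alpha>) *\<^sub>R (H *v u) + (2*\<beta>) *\<^sub>R (H *v v) + (\<alpha>^2 - \<beta>^2) *\<^sub>R u - (2*\<alpha>*\<beta>) *\<^sub>R v)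
        = u \<bullet> ((cc * (g \<bullet> u)) *\<^sub>R g)" using R by simp
  have e2: "v \<bullet> (H *v (H *v v) - (2*\<alpha>) *\<^sub>R (H *v v) - (2*\<beta>) *\<^sub>R (H *v u) + (\<alpha>^2 - \<beta>^2) *\<^sub>R v + (2*\<alpha>*\<beta>) *\<^sub>R u)
        = v \<bullet> ((cc * (g \<bullet> v)) *\<^sub>R g)" using I by simp
  have e3: "v \<bullet> (H *v (H *v u) - (2*\<alpha>) *\<^sub>R (H *v u) + (2*\<beta>) *\<^sub>R (H *v v) + (\<alpha>^2 - \<beta>^2) *\<^sub>R u - (2*\<alpha>*\<beta>) *\<^sub>R v)
        = v \<bullet> ((cc * (g \<bullet> u)) *\<^sub>R g)" using R by simp
  have e4: "u \<bullet> (H *v (H *v v) - (2*\<alpha>) *\<^sub>R (H *v v) - (2*\<beta>) *\<^sub>R (H *v u) + (\<alpha>^2 - \<beta>^2) *\<^sub>R v + (2*\<alpha>*\<beta>) *\<^sub>R u)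
        = u \<bullet> ((cc * (g \<bullet> v)) *\<^sub>R g)" using I by simp
  note ex = inner_add_right inner_diff_right inner_scaleR_right s1 s2 s3 s4 s5
  from e1 e2 have e12: "(u \<bullet> (H *v (H *v u) - (2*\<alpha>) *\<^sub>R (H *v u) + (2*\<beta>) *\<^sub>R (H *v v) + (\<alpha>^2 - \<beta>^2) *\<^sub>R u - (2*\<alpha>*\<beta>) *\<^sub>R v))
     + (v \<bullet> (H *v (H *v v) - (2*\<alpha>) *\<^sub>R (H *v v) - (2*\<beta>) *\<^sub>R (H *v u) + (\<alpha>^2 - \<beta>^2) *\<^sub>R v + (2*\<alpha>*\<beta>) *\<^sub>R u))
     = u \<bullet> ((cc * (g \<bullet> u)) *\<^sub>R g) + v \<bullet> ((cc * (g \<bullet> v)) *\<^sub>R g)" by simp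
  then show "((H *v u) \<bullet> (H *v u) + (H *v v) \<bullet> (H *v v)) - 2 * \<alpha> * (u \<bullet> (H *v u) + v \<bullet> (H *v v))
           + (\<alpha>^2 - \<beta>^2) * (u \<bullet> u + v \<bullet> v) = cc * ((g \<bullet> u)^2 + (g \<bullet> v)^2)"
    unfolding ex by (simp add: algebra_simps power2_eq_square inner_commute)
  from e3 e4 have e34: "(v \<bullet> (H *v (H *v u) - (2*\<alpha>) *\<^sub>R (H *v u) + (2*\<beta>) *\<^sub>R (H *v v) + (\<alpha>^2 - \<beta>^2) *\<^sub>R u - (2*\<alpha>*\<beta>) *\<^sub>R v))
     - (u \<bullet> (H *v (H *v v) - (2*\<alpha>) *\<^sub>R (H *v v) - (2*\<beta>) *\<^sub>R (H *v u) + (\<alpha>^2 - \<beta>^2) *\<^sub>R v + (2*\<alpha>*\<beta>) *\<^sub>R u))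
     = v \<bullet> ((cc * (g \<bullet> u)) *\<^sub>R g) - u \<bullet> ((cc * (g \<bullet> v)) *\<^sub>R g)" by simp
  then have "2 * (\<beta> * ((u \<bullet> (H *v u) + v \<bullet> (H *v v)) - \<alpha> * (u \<bullet> u + v \<bullet> v))) = 0"
    unfolding ex by (simp add: algebra_simps power2_eq_square inner_commute)
  then show "\<beta> * ((u \<bullet> (H *v u) + v \<bullet> (H *v v)) - \<alpha> * (u \<bullet> u + v \<bullet> v)) = 0" by simp
qed

lemma Q_explicit:
  assumes "transpose H = H"
  shows "x \<bullet> (Mm H g cc t *v x) = (H *v x) \<bullet> (H *v x) - 2 * t * (x \<bullet> (H *v x)) + t^2 * (x \<bullet> x) - cc * (g \<bullet> x)^2"
  unfolding Mm_form[OF assms] Am_mulv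
  by (simp add: inner_diff_left inner_diff_right power2_eq_square algebra_simps inner_commute)

lemma Q_below:
  assumes sym: "transpose H = H" and psdA: "\<And>x. 0 \<le> x \<bullet> (Am H ls *v x)"
    and psdM: "\<And>x. 0 \<le> x \<bullet> (Mm H g cc ls *v x)" and le: "t \<le> ls"
  shows "(ls - t)^2 * (x \<bullet> x) \<le> x \<bullet> (Mm H g cc t *v x)"
proof -
  have "x \<bullet> (Mm H g cc t *v x) = x \<bullet> (Mm H g cc ls *v x) + 2 * (ls - t) * (x \<bullet> (Am H ls *v x)) + (ls - t)^2 * (x \<bullet> x)"
    by (rule Q_shift[OF sym])
  moreover have "0 \<le> 2 * (ls - t) * (x \<bullet> (Am H ls *v x))" using le psdA[of x] by simp
  ultimately show ?thesis using psdM[of x] by linarith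
qed

lemma cvec_eq_iff: "z = z' \<longleftrightarrow> re_v z = re_v z' \<and> im_v z = im_v z'"
  by (auto simp: vec_eq_iff re_v_def im_v_def complex_eq_iff)

theorem theorem2p7:
  fixes H :: "real^'n^'n" and g0 :: "real^'n" and \<gamma> :: real
  assumes "transpose H = H" and "g0 \<noteq> 0" and "\<gamma> > 0"
  shows "\<exists>lams::real.
           qep_eigenvalue H g0 \<gamma> (complex_of_real lams)
         \<and> (\<forall>\<mu>. qep_eigenvalue H g0 \<gamma> \<mu> \<longrightarrow>
                 lams \<le> Re \<mu> \<and> (Re \<mu> = lams \<longrightarrow> \<mu> = complex_of_real lams))
         \<and> pqep_feasible H g0 \<gamma> lams
         \<and> (\<forall>lam. pqep_feasible H g0 \<gamma> lam \<longrightarrow> lams \<le> lam)"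
proof -
  note sym = assms(1)
  define cc where "cc = 1 / \<gamma>^2"
  have cc: "cc > 0" using assms(3) cc_def by simp
  obtain ls w0 where psdA: "\<And>x. 0 \<le> x \<bullet> (Am H ls *v x)" and psdM: "\<And>x. 0 \<le> x \<bullet> (Mm H g0 cc ls *v x)"
    and w0: "w0 \<noteq> 0" "Mm H g0 cc ls *v w0 = 0"
    using exists_lstar[OF sym assms(2) cc] by blast
  have feas_iff: "pqep_feasible H g0 \<gamma> l \<longleftrightarrow> (\<exists>w. w \<noteq> 0 \<and> Mm H g0 cc l *v w = 0)" for l
  proof -
    have "Mm H g0 cc l *v w = ((H - mat l) ** (H - mat l)) *v w - (1 / \<gamma>^2) *s (outer g0 *v w)" for w
      unfolding Mm_def Am_def cc_def scalar_mult_eq_scaleR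
      by (simp only: matrix_vector_mult_diff_rdistrib scaleR_mulv)
    hence "((H - mat l) ** (H - mat l)) *v w = (1 / \<gamma>^2) *s (outer g0 *v w) \<longleftrightarrow> Mm H g0 cc l *v w = 0" for w
      by (simp only: eq_iff_diff_eq_0[of "((H - mat l) ** (H - mat l)) *v w"])
    thus ?thesis unfolding pqep_feasible_def by (simp only:)
  qed
  have feas: "pqep_feasible H g0 \<gamma> ls" unfolding feas_iff using w0 by blast
  have feasmin: "ls \<le> lam" if "pqep_feasible H g0 \<gamma> lam" for lam
  proof (rule ccontr)
    assume "\<not> ls \<le> lam"
    hence lt: "lam < ls" by simp
    have "\<exists>w. w \<noteq> 0 \<and> Mm H g0 cc lam *v w = 0" using that unfolding feas_iff .
    then obtain w where w: "w \<noteq> 0" "Mm H g0 cc lam *v w = 0" by blast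
    have "(ls - lam)^2 * (w \<bullet> w) \<le> w \<bullet> (Mm H g0 cc lam *v w)"
      using Q_below[OF sym psdA psdM, of lam w] lt by linarith
    moreover have "(ls - lam)^2 * (w \<bullet> w) > 0" using lt w(1) by simp
    ultimately show False using w(2) by simp
  qed
  have eig: "qep_eigenvalue H g0 \<gamma> (complex_of_real ls)"
  proof -
    define cw where "cw = (\<chi> i. complex_of_real (w0$i))"
    have re: "re_v cw = w0" and im: "im_v cw = 0" by (simp_all add: cw_def re_v_def im_v_def vec_eq_iff)
    have "cw \<noteq> 0" using w0(1) re reim_zero by metis
    moreover have "((cmat H - mat (complex_of_real ls)) ** (cmat H - mat (complex_of_real ls))) *v cw
          = complex_of_real (1 / \<gamma>^2) *s (cmat (outer g0) *v cw)"
    proof -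
      have "Am H ls *v (Am H ls *v w0) = (cc * (g0 \<bullet> w0)) *\<^sub>R g0"
        using w0(2) unfolding Mm_mulv by simp
      moreover have "Am H ls *v (Am H ls *v w0) = H *v (H *v w0) - (2 * ls) *\<^sub>R (H *v w0) + (ls^2) *\<^sub>R w0"
      proof -
        have "Am H ls *v (Am H ls *v w0) = (H *v (H *v w0) - ls *\<^sub>R (H *v w0)) - (ls *\<^sub>R (H *v w0) - (ls * ls) *\<^sub>R w0)"
          by (simp only: Am_mulv matrix_vector_mult_diff_distrib matrix_vector_mult_scaleR scaleR_diff_right scaleR_scaleR)
        also have "\<dots> = H *v (H *v w0) - (2 * ls) *\<^sub>R (H *v w0) + (ls^2) *\<^sub>R w0"
          unfolding vec_eq_iff by (simp add: power2_eq_square)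
        finally show ?thesis .
      qed
      ultimately have "H *v (H *v w0) - (2 * ls) *\<^sub>R (H *v w0) + (ls^2) *\<^sub>R w0 = (cc * (g0 \<bullet> w0)) *\<^sub>R g0"
        by simp
      note h = this
      have r1: "re_v (((cmat H - mat (complex_of_real ls)) ** (cmat H - mat (complex_of_real ls))) *v cw)
         = H *v (H *v w0) - (2 * ls) *\<^sub>R (H *v w0) + (ls^2) *\<^sub>R w0"
        unfolding qep_expand re_v_ops re_cmat im_cmat re im
        by (simp add: power2_eq_square)
      have i1: "im_v (((cmat H - mat (complex_of_real ls)) ** (cmat H - mat (complex_of_real ls))) *v cw) = 0"
        unfolding qep_expand re_v_ops re_cmat im_cmat re im
        by (simp add: power2_eq_square)
      have r2: "re_v (complex_of_real (1 / \<gamma>^2) *s (cmat (outer g0) *v cw)) = (cc * (g0 \<bullet> w0)) *\<^sub>R g0"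
        unfolding re_v_ops re_cmat im_cmat re im outer_mulv cc_def by simp
      have i2: "im_v (complex_of_real (1 / \<gamma>^2) *s (cmat (outer g0) *v cw)) = 0"
        unfolding re_v_ops re_cmat im_cmat re im outer_mulv cc_def by simp
      show ?thesis unfolding cvec_eq_iff r1 i1 r2 i2 h by simp
    qed
    ultimately show ?thesis unfolding qep_eigenvalue_def by blast
  qed
  have eigmin: "ls \<le> Re \<mu> \<and> (Re \<mu> = ls \<longrightarrow> \<mu> = complex_of_real ls)" if "qep_eigenvalue H g0 \<gamma> \<mu>" for \<mu>
  proof -
    have "\<exists>w. w \<noteq> 0 \<and> ((cmat H - mat \<mu>) ** (cmat H - mat \<mu>)) *v w
          = complex_of_real cc *s (cmat (outer g0) *v w)"
      using that unfolding qep_eigenvalue_def cc_def .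
    then obtain w where w: "w \<noteq> 0" and eq: "((cmat H - mat \<mu>) ** (cmat H - mat \<mu>)) *v w
          = complex_of_real cc *s (cmat (outer g0) *v w)"
      by blast
    define u where "u = re_v w"
    define v where "v = im_v w"
    define \<alpha> where "\<alpha> = Re \<mu>"
    define \<beta> where "\<beta> = Im \<mu>"
    note RI = qep_real_eqs[OF eq, folded u_def v_def \<alpha>_def \<beta>_def]
    note E = scalar_eqs[OF sym RI]
    define a where "a = u \<bullet> u + v \<bullet> v"
    define b where "b = u \<bullet> (H *v u) + v \<bullet> (H *v v)"
    define C where "C = (H *v u) \<bullet> (H *v u) + (H *v v) \<bullet> (H *v v)"
    define k where "k = cc * ((g0 \<bullet> u)^2 + (g0 \<bullet> v)^2)"
    have E1: "C - 2 * \<alpha> * b + (\<alpha>^2 - \<beta>^2) * a = k" using E(1) unfolding a_def b_def C_def k_def .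
    have E2: "\<beta> * (b - \<alpha> * a) = 0" using E(2) unfolding a_def b_def .
    have apos: "a > 0"
    proof -
      have "u \<noteq> 0 \<or> v \<noteq> 0" using w unfolding u_def v_def by (simp add: reim_zero)
      hence "u \<bullet> u > 0 \<or> v \<bullet> v > 0" by auto
      moreover have "u \<bullet> u \<ge> 0" "v \<bullet> v \<ge> 0" by auto
      ultimately show ?thesis unfolding a_def by linarith
    qed
    have Qsum: "u \<bullet> (Mm H g0 cc t *v u) + v \<bullet> (Mm H g0 cc t *v v) = C - 2 * t * b + t^2 * a - k" for t
      unfolding Q_explicit[OF sym] a_def b_def C_def k_def by (simp add: algebra_simps)
    have Asum: "u \<bullet> (Am H ls *v u) + v \<bullet> (Am H ls *v v) = b - ls * a"
      unfolding Am_form a_def b_def by (simp add: algebra_simps)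
    show ?thesis
    proof (cases "\<beta> = 0")
      case False
      hence bA: "b = \<alpha> * a" using E2 by simp
      have "0 \<le> b - ls * a" using Asum psdA[of u] psdA[of v] by linarith
      hence "ls * a \<le> \<alpha> * a" using bA by simp
      hence ge: "ls \<le> \<alpha>" using apos by simp
      have ne: "\<alpha> \<noteq> ls"
      proof
        assume al: "\<alpha> = ls"
        have "u \<bullet> (Am H ls *v u) + v \<bullet> (Am H ls *v v) = 0" using Asum bA al by simp
        hence z1: "u \<bullet> (Am H ls *v u) = 0" and z2: "v \<bullet> (Am H ls *v v) = 0"
          using psdA[of u] psdA[of v] by linarith+
        have k1: "Am H ls *v u = 0" by (rule psd_kernel[OF Am_sym[OF sym] psdA z1])
        have k2: "Am H ls *v v = 0" by (rule psd_kernel[OF Am_sym[OF sym] psdA z2])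
        have "u \<bullet> (Mm H g0 cc ls *v u) + v \<bullet> (Mm H g0 cc ls *v v) \<le> 0"
        proof -
          have "0 \<le> cc * (g0 \<bullet> u)^2" "0 \<le> cc * (g0 \<bullet> v)^2" using cc by simp_all
          thus ?thesis unfolding Mm_form[OF sym] k1 k2 by simp
        qed
        moreover have "u \<bullet> (Mm H g0 cc ls *v u) + v \<bullet> (Mm H g0 cc ls *v v) = a * \<beta>^2"
          unfolding Qsum using E1 bA al by (simp add: algebra_simps power2_eq_square)
        moreover have "a * \<beta>^2 > 0" using apos False by simp
        ultimately show False by simp
      qed
      show ?thesis using ge ne \<alpha>_def by simp
    next
      case True
      have Q0: "u \<bullet> (Mm H g0 cc \<alpha> *v u) + v \<bullet> (Mm H g0 cc \<alpha> *v v) = 0"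
        unfolding Qsum using E1 True by (simp add: algebra_simps)
      have ge: "ls \<le> \<alpha>"
      proof (rule ccontr)
        assume "\<not> ls \<le> \<alpha>"
        hence lt: "\<alpha> < ls" by simp
        have "(ls - \<alpha>)^2 * (u \<bullet> u) \<le> u \<bullet> (Mm H g0 cc \<alpha> *v u)"
             "(ls - \<alpha>)^2 * (v \<bullet> v) \<le> v \<bullet> (Mm H g0 cc \<alpha> *v v)"
          using Q_below[OF sym psdA psdM] lt by auto
        moreover have "(ls - \<alpha>)^2 * a > 0" using lt apos by simp
        ultimately show False using Q0 unfolding a_def by (simp add: algebra_simps)
      qed
      show ?thesis using ge True \<alpha>_def \<beta>_def by (simp add: complex_eq_iff)
    qed
  qed
  show ?thesis using eig eigmin feas feasmin by blast
qed

end
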